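(* Let $(X,d)$ be a compact metric space, $\Lambda$ a finite nonempty set, and $\mathcal{F}=\{X; f_{\lambda}\mid \lambda\in\Lambda\}$ a parameterized iterated function system of continuous maps $f_\lambda:X\to X$. If $\mathcal{F}$ is uniformly contracting, then $\mathcal{F}$ has the asymptotic average shadowing property.
   Context: For $\sigma=\{\lambda_0,\lambda_1,\dots\}\in\Lambda^{\mathbb{Z}_+}$ write $\mathcal{F}_{\sigma_n}=f_{\lambda_{n-1}}\circ\cdots\circ f_{\lambda_0}$ (with $\mathcal{F}_{\sigma_0}$ the identity). A sequence $\{x_i\}_{i\ge0}$ in $X$ is an asymptotic average pseudo-orbit of $\mathcal{F}$ if there is $\sigma=\{\lambda_0,\lambda_1,\dots\}\in\Lambda^{\mathbb{Z}_+}$ with $\lim_{n\to\infty}\frac1n\sum_{i=0}^{n-1}d(f_{\lambda_i}(x_i),x_{i+1})=0$. It is asymptotically shadowed in average by $z\in X$ if there is $\sigma\in\Lambda^{\mathbb{Z}_+}$ with $\lim_{n\to\infty}\frac1n\sum_{i=0}^{n-1}d(\mathcal{F}_{\sigma_i}(z),x_i)=0$. $\mathcal{F}$ has the asymptotic average shadowing property if every asymptotic average pseudo-orbit of $\mathcal{F}$ is asymptotically shadowed in average by some point of $X$. $\mathcal{F}$ is uniformly contracting if $\beta=\sup_{\lambda\in\Lambda}\sup_{x\neq y}\frac{d(f_\lambda(x),f_\lambda(y))}{d(x,y)}$ satisfies $\beta<1$. *)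

theory Defs
  imports "HOL-Analysis.Analysis"
begin

fun comp_seq :: "('l \<Rightarrow> 'a \<Rightarrow> 'a) \<Rightarrow> (nat \<Rightarrow> 'l) \<Rightarrow> nat \<Rightarrow> 'a \<Rightarrow> 'a" where
  "comp_seq f \<sigma> 0 = id"
| "comp_seq f \<sigma> (Suc n) = f (\<sigma> n) \<circ> comp_seq f \<sigma> n"

definition asymp_avg_pseudo_orbit ::
  "'a::metric_space set \<Rightarrow> 'l set \<Rightarrow> ('l \<Rightarrow> 'a \<Rightarrow> 'a) \<Rightarrow> (nat \<Rightarrow> 'a) \<Rightarrow> bool" where
  "asymp_avg_pseudo_orbit X L f x \<longleftrightarrow>
     (\<forall>i. x i \<in> X) \<and>
     (\<exists>\<sigma>. (\<forall>i. \<sigma> i \<in> L) \<and>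
        (\<lambda>n. (\<Sum>i<n. dist (f (\<sigma> i) (x i)) (x (Suc i))) / real n) \<longlonglongrightarrow> 0)"

definition asymp_shadowed_in_avg ::
  "'a::metric_space set \<Rightarrow> 'l set \<Rightarrow> ('l \<Rightarrow> 'a \<Rightarrow> 'a) \<Rightarrow> (nat \<Rightarrow> 'a) \<Rightarrow> 'a \<Rightarrow> bool" where
  "asymp_shadowed_in_avg X L f x z \<longleftrightarrow>
     (\<exists>\<sigma>. (\<forall>i. \<sigma> i \<in> L) \<and>
        (\<lambda>n. (\<Sum>i<n. dist (comp_seq f \<sigma> i z) (x i)) / real n) \<longlonglongrightarrow> 0)"

definition asymp_avg_shadowing_property ::
  "'a::metric_space set \<Rightarrow> 'l set \<Rightarrow> ('l \<Rightarrow> 'a \<Rightarrow> 'a) \<Rightarrow> bool" where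
  "asymp_avg_shadowing_property X L f \<longleftrightarrow>
     (\<forall>x. asymp_avg_pseudo_orbit X L f x \<longrightarrow> (\<exists>z\<in>X. asymp_shadowed_in_avg X L f x z))"

text \<open>The real supremum is meaningful only for bounded sets, so uniform contraction
  also records that each ratio set is bounded above (implicit in beta < 1 in the paper).
  beta = sup over l in L, sup over x \<noteq> y in X of d(f_l x, f_l y)/d(x,y).\<close>
definition contraction_const ::
  "'a::metric_space set \<Rightarrow> 'l set \<Rightarrow> ('l \<Rightarrow> 'a \<Rightarrow> 'a) \<Rightarrow> real" where
  "contraction_const X L f =
     (SUP l\<in>L. (SUP p\<in>{(x, y). x \<in> X \<and> y \<in> X \<and> x \<noteq> y}.
        dist (f l (fst p)) (f l (snd p)) / dist (fst p) (snd p)))"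

definition uniformly_contracting ::
  "'a::metric_space set \<Rightarrow> 'l set \<Rightarrow> ('l \<Rightarrow> 'a \<Rightarrow> 'a) \<Rightarrow> bool" where
  "uniformly_contracting X L f \<longleftrightarrow>
     (\<forall>l\<in>L. bdd_above ((\<lambda>p. dist (f l (fst p)) (f l (snd p)) / dist (fst p) (snd p)) `
                          {(x, y). x \<in> X \<and> y \<in> X \<and> x \<noteq> y})) \<and>
     contraction_const X L f < 1"

end

theory Submission
  imports Defs
begin

lemma contr_bound:
  fixes X :: "'a::metric_space set" and L :: "'l set" and f :: "'l \<Rightarrow> 'a \<Rightarrow> 'a"
  assumes "finite L" "uniformly_contracting X L f" "l \<in> L" "x \<in> X" "y \<in> X"
  shows "dist (f l x) (f l y) \<le> max (contraction_const X L f) 0 * dist x y"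
proof (cases "x = y")
  case True then show ?thesis by simp
next
  case False
  let ?g = "\<lambda>p. dist (f l (fst p)) (f l (snd p)) / dist (fst p) (snd p)"
  let ?S = "{(x, y). x \<in> X \<and> y \<in> X \<and> x \<noteq> y}"
  have b: "bdd_above (?g ` ?S)" using assms(2,3) unfolding uniformly_contracting_def by auto
  have mem: "(x,y) \<in> ?S" using assms False by auto
  have "?g (x,y) \<le> (SUP p\<in>?S. ?g p)" by (rule cSUP_upper[OF mem b])
  also have "\<dots> \<le> contraction_const X L f"
    unfolding contraction_const_def
    by (rule cSUP_upper[OF assms(3)]) (use assms(1) in auto)
  finally have r: "dist (f l x) (f l y) / dist x y \<le> contraction_const X L f" by simp
  have dp: "dist x y > 0" using False by simp
  have "dist (f l x) (f l y) \<le> contraction_const X L f * dist x y"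
    using r dp by (simp add: divide_le_eq)
  also have "\<dots> \<le> max (contraction_const X L f) 0 * dist x y"
    using dp by (intro mult_right_mono) auto
  finally show ?thesis .
qed

theorem mainTheorem1:
  fixes X :: "'a::metric_space set" and L :: "'l set" and f :: "'l \<Rightarrow> 'a \<Rightarrow> 'a"
  assumes "compact X" and "X \<noteq> {}"
    and "finite L" and "L \<noteq> {}"
    and "\<And>l. l \<in> L \<Longrightarrow> f l ` X \<subseteq> X"
    and "\<And>l. l \<in> L \<Longrightarrow> continuous_on X (f l)"
    and "uniformly_contracting X L f"
  shows "asymp_avg_shadowing_property X L f"
  unfolding asymp_avg_shadowing_property_def
proof (intro allI impI)
  fix x assume "asymp_avg_pseudo_orbit X L f x"
  then obtain \<sigma> where xX: "\<And>i. x i \<in> X" and sL: "\<And>i. \<sigma> i \<in> L"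
    and lim: "(\<lambda>n. (\<Sum>i<n. dist (f (\<sigma> i) (x i)) (x (Suc i))) / real n) \<longlonglongrightarrow> 0"
    unfolding asymp_avg_pseudo_orbit_def by blast
  define c where "c = max (contraction_const X L f) 0"
  have c0: "0 \<le> c" and c1: "c < 1"
    using assms(7) unfolding c_def uniformly_contracting_def by auto
  define z where "z = x 0"
  define y where "y = (\<lambda>i. comp_seq f \<sigma> i z)"
  define e where "e = (\<lambda>i. dist (y i) (x i))"
  define d where "d = (\<lambda>i. dist (f (\<sigma> i) (x i)) (x (Suc i)))"
  have yX: "y i \<in> X" for i
  proof (induction i)
    case 0 then show ?case using xX by (simp add: y_def z_def)
  next
    case (Suc i) then show ?case using assms(5)[OF sL[of i]] by (auto simp: y_def)
  qed
  have ys: "y (Suc i) = f (\<sigma> i) (y i)" for i by (simp add: y_def)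
  have step: "e (Suc i) \<le> c * e i + d i" for i
  proof -
    have "e (Suc i) \<le> dist (f (\<sigma> i) (y i)) (f (\<sigma> i) (x i)) + d i"
      unfolding e_def d_def ys by (rule dist_triangle)
    also have "dist (f (\<sigma> i) (y i)) (f (\<sigma> i) (x i)) \<le> c * e i"
      unfolding c_def e_def using contr_bound[OF assms(3,7) sL yX xX] .
    finally show ?thesis by simp
  qed
  have e0: "e 0 = 0" by (simp add: e_def y_def z_def)
  have key: "(1 - c) * (\<Sum>i<n. e i) \<le> (\<Sum>i<n. d i)" for n
  proof -
    have "(\<Sum>i<n. e i) \<le> (\<Sum>i<Suc n. e i)" by (simp add: e_def)
    also have "\<dots> = (\<Sum>i<n. e (Suc i))" by (simp only: sum.lessThan_Suc_shift e0 add_0)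
    also have "\<dots> \<le> (\<Sum>i<n. c * e i + d i)" by (rule sum_mono) (rule step)
    also have "\<dots> = c * (\<Sum>i<n. e i) + (\<Sum>i<n. d i)" by (simp add: sum.distrib sum_distrib_left)
    finally show ?thesis by (simp add: algebra_simps)
  qed
  have lim2: "(\<lambda>n. ((\<Sum>i<n. d i) / real n) / (1 - c)) \<longlonglongrightarrow> 0"
    using tendsto_divide_zero[OF lim[folded d_def], of "1 - c"] by simp
  have "(\<lambda>n. (\<Sum>i<n. e i) / real n) \<longlonglongrightarrow> 0"
  proof (rule tendsto_sandwich[OF _ _ tendsto_const lim2])
    show "\<forall>\<^sub>F n in sequentially. 0 \<le> (\<Sum>i<n. e i) / real n"
      by (intro always_eventually allI divide_nonneg_nonneg sum_nonneg) (auto simp: e_def)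
    show "\<forall>\<^sub>F n in sequentially. (\<Sum>i<n. e i) / real n \<le> ((\<Sum>i<n. d i) / real n) / (1 - c)"
    proof (intro always_eventually allI)
      fix n
      have "(\<Sum>i<n. e i) \<le> (\<Sum>i<n. d i) / (1 - c)"
        using key[of n] c1 by (simp add: le_divide_eq mult.commute)
      then show "(\<Sum>i<n. e i) / real n \<le> ((\<Sum>i<n. d i) / real n) / (1 - c)"
        by (simp add: divide_right_mono divide_divide_eq_left mult.commute)
          (metis divide_divide_eq_left divide_right_mono of_nat_0_le_iff mult.commute)
    qed
  qed
  then have "asymp_shadowed_in_avg X L f x z"
    unfolding asymp_shadowed_in_avg_def e_def y_def using sL by blast
  moreover have "z \<in> X" using xX by (simp add: z_def)
  ultimately show "\<exists>z\<in>X. asymp_shadowed_in_avg X L f x z" by blast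
qed

end
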